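(* Let $x$ be a test input with finite nonempty candidate-output set $\mathcal{Y}_x$, let $\sigma^*_x\colon \mathcal{Y}_x\to\mathbb{N}$ be the ground-truth ranking function on $\mathcal{Y}_x$, and let $\hat{\sigma}^U_x\colon\mathcal{Y}_x\to\mathbb{N}$ be the ranking derived from a utility function $U$ learnt by an $\epsilon$-convergent L2R algorithm, i.e. there is a non-negative integer $\epsilon$ with $\max_{y\in\mathcal{Y}_x}|\hat{\sigma}^U_x(y)-\sigma^*_x(y)|\le\epsilon$. Let $\pi^*$ be an optimal policy for $M_x(\sigma^*_x)$, and let $\hat{\pi}_n$ be the proper policy for $M_x(\hat{\sigma}^U_x)$ learnt by a $\delta$-convergent RL algorithm after $n$ episodes. Then, as $n\to\infty$, $$\lim_{n\to\infty}\mathcal{R}_{\sigma^*_x}(\hat{\pi}_n|x)\;\ge\;\mathcal{R}_{\sigma^*_x}(\pi^*|x)-\delta-\epsilon .$$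
   Context: Setting: for an input $x$, $\mathcal{Y}_x$ is the finite set of admissible outputs (e.g. extractive summaries of $x$ satisfying a length limit). A ranking function $\sigma_x\colon\mathcal{Y}_x\to\mathbb{N}$ assigns to each $y\in\mathcal{Y}_x$ the number of candidates in $\mathcal{Y}_x$ of equal or lower quality than $y$ (including $y$ itself) with respect to some quality preorder; in particular a highest-quality candidate gets value $|\mathcal{Y}_x|$. The ground-truth ranking $\sigma^*_x$ is of this form. Given a utility function $U(y,x)\in\mathbb{R}$, the derived ranking is $\hat{\sigma}^U_x(y)=|\{y'\in\mathcal{Y}_x: U(y',x)\le U(y,x)\}|$, so that $\hat{\sigma}^U_x(y_1)>\hat{\sigma}^U_x(y_2)$ iff $U(y_1,x)>U(y_2,x)$. $M_x(\sigma_x)$ denotes the episodic Markov decision process for generating an output for $x$ (states are partial outputs, actions add a component or terminate) in which the only nonzero reward is given at the end of an episode and equals $\sigma_x(y)$ for the generated output $y$. A policy $\pi$ induces probabilities $\pi(y|x)$ of generating $y\in\mathcal{Y}_x$; it is proper if $\sum_{y\in\mathcal{Y}_x}\pi(y|x)=1$. For a proper policy the expected reward is $\mathcal{R}_{\sigma_x}(\pi|x)=\sum_{y\in\mathcal{Y}_x}\pi(y|x)\sigma_x(y)$, and an optimal policy for $M_x(\sigma_x)$ is one maximizing this quantity (so it puts positive probability only on outputs with $\sigma_x(y)=|\mathcal{Y}_x|$ and has expected reward $|\mathcal{Y}_x|$). An RL algorithm is $\delta$-convergent for $M_x(\sigma_x)$ (with $\delta\in\mathbb{R}_{\ge0}$)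 if, denoting by $\pi_n$ its policy after $n$ episodes of learning and by $\pi^*$ an optimal policy for $M_x(\sigma_x)$, $\lim_{n\to\infty}\big(\mathcal{R}_{\sigma_x}(\pi^*|x)-\mathcal{R}_{\sigma_x}(\pi_n|x)\big)\le\delta$. *)

theory Defs
  imports "HOL-Analysis.Analysis"
begin

text \<open>A ranking function on the candidate set Y induced by a (total) quality preorder le:
  sigma y is the number of candidates of equal or lower quality than y (including y).\<close>
definition is_ranking_fn :: "'y set \<Rightarrow> ('y \<Rightarrow> nat) \<Rightarrow> bool" where
  "is_ranking_fn Y \<sigma> \<longleftrightarrow>
     (\<exists>le :: 'y \<Rightarrow> 'y \<Rightarrow> bool.
        (\<forall>y\<in>Y. le y y) \<and>
        (\<forall>a\<in>Y. \<forall>b\<in>Y. \<forall>c\<in>Y. le a b \<longrightarrow> le b c \<longrightarrow> le a c) \<and>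
        (\<forall>a\<in>Y. \<forall>b\<in>Y. le a b \<or> le b a) \<and>
        (\<forall>y\<in>Y. \<sigma> y = card {y'\<in>Y. le y' y}))"

text \<open>Ranking derived from a utility function U (for the fixed input x, U is a function of y).\<close>
definition derived_ranking :: "'y set \<Rightarrow> ('y \<Rightarrow> real) \<Rightarrow> 'y \<Rightarrow> nat" where
  "derived_ranking Y U y = card {y'\<in>Y. U y' \<le> U y}"

text \<open>A policy is represented by the probabilities pi y of generating each output y.\<close>
definition proper_policy :: "'y set \<Rightarrow> ('y \<Rightarrow> real) \<Rightarrow> bool" where
  "proper_policy Y \<pi> \<longleftrightarrow> (\<forall>y\<in>Y. 0 \<le> \<pi> y) \<and> (\<Sum>y\<in>Y. \<pi> y) = 1"

definition expected_reward :: "'y set \<Rightarrow> ('y \<Rightarrow> nat) \<Rightarrow> ('y \<Rightarrow> real) \<Rightarrow> real" where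
  "expected_reward Y \<sigma> \<pi> = (\<Sum>y\<in>Y. \<pi> y * real (\<sigma> y))"

definition optimal_policy :: "'y set \<Rightarrow> ('y \<Rightarrow> nat) \<Rightarrow> ('y \<Rightarrow> real) \<Rightarrow> bool" where
  "optimal_policy Y \<sigma> \<pi> \<longleftrightarrow> proper_policy Y \<pi> \<and>
     (\<forall>\<pi>'. proper_policy Y \<pi>' \<longrightarrow> expected_reward Y \<sigma> \<pi>' \<le> expected_reward Y \<sigma> \<pi>)"

text \<open>delta-convergence of the sequence of learnt policies pis n (policy after n episodes)
  for M_x(sigma): the optimality gap converges and its limit is at most delta.\<close>
definition delta_convergent :: "'y set \<Rightarrow> ('y \<Rightarrow> nat) \<Rightarrow> (nat \<Rightarrow> 'y \<Rightarrow> real) \<Rightarrow> real \<Rightarrow> bool" where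
  "delta_convergent Y \<sigma> \<pi>s \<delta> \<longleftrightarrow>
     (\<forall>\<pi>opt. optimal_policy Y \<sigma> \<pi>opt \<longrightarrow>
        (let gap = (\<lambda>n. expected_reward Y \<sigma> \<pi>opt - expected_reward Y \<sigma> (\<pi>s n))
         in convergent gap \<and> lim gap \<le> \<delta>))"

end

theory Submission
  imports Defs
begin

lemma rank_le_card:
  assumes "finite Y" shows "derived_ranking Y U y \<le> card Y"
  unfolding derived_ranking_def using assms by (intro card_mono) auto

lemma reward_le:
  assumes "finite Y" "proper_policy Y \<pi>" "\<forall>y\<in>Y. \<sigma> y \<le> card Y"
  shows "expected_reward Y \<sigma> \<pi> \<le> real (card Y)"
proof -
  have "expected_reward Y \<sigma> \<pi> \<le> (\<Sum>y\<in>Y. \<pi> y * real (card Y))"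
    unfolding expected_reward_def using assms
    by (intro sum_mono mult_left_mono) (auto simp: proper_policy_def)
  also have "\<dots> = real (card Y)" using assms
    by (simp add: sum_distrib_right[symmetric] proper_policy_def)
  finally show ?thesis .
qed

lemma reward_diff:
  assumes "proper_policy Y \<pi>" "\<forall>y\<in>Y. \<bar>int (s1 y) - int (s2 y)\<bar> \<le> int e"
  shows "expected_reward Y s1 \<pi> - real e \<le> expected_reward Y s2 \<pi>"
proof -
  have "expected_reward Y s1 \<pi> \<le> (\<Sum>y\<in>Y. \<pi> y * (real (s2 y) + real e))"
    unfolding expected_reward_def using assms
    by (intro sum_mono mult_left_mono) (auto simp: proper_policy_def abs_le_iff)
  also have "\<dots> = expected_reward Y s2 \<pi> + real e" using assms
    by (simp add: expected_reward_def distrib_left sum.distrib sum_distrib_right[symmetric] proper_policy_def)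
  finally show ?thesis by simp
qed

theorem theorem1:
  fixes Y :: "'y set" and \<sigma>star :: "'y \<Rightarrow> nat" and U :: "'y \<Rightarrow> real"
    and \<epsilon> :: nat and \<delta> :: real
    and \<pi>star :: "'y \<Rightarrow> real" and \<pi>hat :: "nat \<Rightarrow> 'y \<Rightarrow> real"
  assumes "finite Y" and "Y \<noteq> {}"
    and "is_ranking_fn Y \<sigma>star"
    and "\<forall>y\<in>Y. \<bar>int (derived_ranking Y U y) - int (\<sigma>star y)\<bar> \<le> int \<epsilon>"
    and "optimal_policy Y \<sigma>star \<pi>star"
    and "0 \<le> \<delta>"
    and "\<forall>n. proper_policy Y (\<pi>hat n)"
    and "delta_convergent Y (derived_ranking Y U) \<pi>hat \<delta>"
  shows "liminf (\<lambda>n. ereal (expected_reward Y \<sigma>star (\<pi>hat n)))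
           \<ge> ereal (expected_reward Y \<sigma>star \<pi>star - \<delta> - real \<epsilon>)"
proof -
  let ?N = "real (card Y)"
  let ?s = "derived_ranking Y U"
  have sstar_le: "\<forall>y\<in>Y. \<sigma>star y \<le> card Y"
  proof
    fix y assume "y \<in> Y"
    obtain le where "\<forall>y\<in>Y. \<sigma>star y = card {y'\<in>Y. le y' y}"
      using assms(3) unfolding is_ranking_fn_def by blast
    then have "\<sigma>star y = card {y'\<in>Y. le y' y}" using \<open>y \<in> Y\<close> by blast
    also have "\<dots> \<le> card Y" using assms(1) by (intro card_mono) auto
    finally show "\<sigma>star y \<le> card Y" .
  qed
  have Rstar: "expected_reward Y \<sigma>star \<pi>star \<le> ?N"
    using reward_le[OF assms(1) _ sstar_le] assms(5) by (auto simp: optimal_policy_def)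
  obtain y0 where y0: "y0 \<in> Y" "\<forall>y\<in>Y. U y \<le> U y0"
  proof -
    have "Max (U ` Y) \<in> U ` Y" using assms(1,2) by simp
    then obtain y0 where "y0 \<in> Y" "U y0 = Max (U ` Y)" by auto
    moreover have "\<forall>y\<in>Y. U y \<le> Max (U ` Y)" using assms(1) by simp
    ultimately show ?thesis using that by auto
  qed
  have sy0: "?s y0 = card Y"
  proof -
    have "{y'\<in>Y. U y' \<le> U y0} = Y" using y0 by auto
    then show ?thesis unfolding derived_ranking_def by simp
  qed
  define \<pi>o where "\<pi>o = (\<lambda>y. if y = y0 then (1::real) else 0)"
  have po: "proper_policy Y \<pi>o" using y0 assms(1)
    by (simp add: proper_policy_def \<pi>o_def)
  have Ro: "expected_reward Y ?s \<pi>o = ?N" using y0 assms(1) sy0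
  proof -
    have "expected_reward Y ?s \<pi>o = (\<Sum>y\<in>Y. if y = y0 then real (?s y) else 0)"
      unfolding expected_reward_def \<pi>o_def by (intro sum.cong) auto
    also have "\<dots> = real (?s y0)" using y0 assms(1) by (simp add: sum.delta)
    finally show ?thesis using sy0 by simp
  qed
  have opt: "optimal_policy Y ?s \<pi>o"
    unfolding optimal_policy_def using po Ro reward_le[OF assms(1)] rank_le_card[OF assms(1)]
    by auto
  define gap where "gap = (\<lambda>n. ?N - expected_reward Y ?s (\<pi>hat n))"
  have "convergent gap" "lim gap \<le> \<delta>"
    using assms(8) opt unfolding delta_convergent_def gap_def Ro[symmetric] Let_def by auto
  then have g: "gap \<longlonglongrightarrow> lim gap" by (simp add: convergent_LIMSEQ_iff)
  have a: "(\<lambda>n. expected_reward Y ?s (\<pi>hat n) - real \<epsilon>) \<longlonglongrightarrow> ?N - lim gap - real \<epsilon>"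
  proof -
    have "(\<lambda>n. ?N - gap n - real \<epsilon>) \<longlonglongrightarrow> ?N - lim gap - real \<epsilon>"
      by (intro tendsto_intros g)
    then show ?thesis by (simp add: gap_def)
  qed
  have L1: "liminf (\<lambda>n. ereal (expected_reward Y ?s (\<pi>hat n) - real \<epsilon>)) = ereal (?N - lim gap - real \<epsilon>)"
    by (intro lim_imp_Liminf) (auto simp: a)
  have L2: "liminf (\<lambda>n. ereal (expected_reward Y ?s (\<pi>hat n) - real \<epsilon>))
      \<le> liminf (\<lambda>n. ereal (expected_reward Y \<sigma>star (\<pi>hat n)))"
    using reward_diff[OF _ assms(4)] assms(7) by (intro Liminf_mono) auto
  have L3: "ereal (expected_reward Y \<sigma>star \<pi>star - \<delta> - real \<epsilon>) \<le> ereal (?N - lim gap - real \<epsilon>)"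
    using Rstar \<open>lim gap \<le> \<delta>\<close> by simp
  show ?thesis using order_trans[OF L3 order_trans[OF eq_refl[OF L1[symmetric]] L2]] by simp
qed

end
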